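(* Let $c>0$, $a=\ln c$, and let $\phi^{\bullet}(\epsilon;c)$, $\phi^{\ell_2}(\epsilon;c)$ be as below. Define $$\phi^{\ell_2}_{\mathrm{ren}}(c)=\lim_{\epsilon\to0^+}\Big[\phi^{\ell_2}-R(\phi^{\ell_2})-R(\phi^{\bullet})\,\phi^{\bullet}+R\big(R(\phi^{\bullet})\,\phi^{\bullet}\big)\Big](\epsilon;c).$$ Then the limit exists and $\phi^{\ell_2}_{\mathrm{ren}}(c)=\dfrac{a^2}{2}+\dfrac{\pi^2}{4}$.
   Context: For $c>0$ and $0<\epsilon<1/2$: $\phi^{\bullet}(\epsilon;c)=\int_0^\infty\frac{y^{-\epsilon}dy}{y+c}$ and $\phi^{\ell_2}(\epsilon;c)=\int_0^\infty\frac{y^{-\epsilon}dy}{y+c}\int_0^\infty\frac{z^{-\epsilon}dz}{z+y}$. The subtraction operator $R$ acts on a function $F(\epsilon;c)$ which, for each fixed $c$, has a Laurent expansion in $\epsilon$ at $\epsilon=0$ with finite principal part: $R(F)$ is the function of $\epsilon$ alone (constant in $c$) equal to the principal (pole) part of the Laurent expansion of $\epsilon\mapsto F(\epsilon;1)$. Products such as $R(\phi^\bullet)\phi^\bullet$ are pointwise products of functions of $(\epsilon,c)$. *)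

theory Defs
  imports "HOL-Analysis.Analysis"
begin

definition phi_dot :: "real \<Rightarrow> real \<Rightarrow> real" where
  "phi_dot \<epsilon> c = (LBINT y:{0<..}. y powr (-\<epsilon>) / (y + c))"

definition phi_l2 :: "real \<Rightarrow> real \<Rightarrow> real" where
  "phi_l2 \<epsilon> c = (LBINT y:{0<..}. y powr (-\<epsilon>) / (y + c) *
                      (LBINT z:{0<..}. z powr (-\<epsilon>) / (z + y)))"

definition is_principal_part :: "(real \<Rightarrow> real) \<Rightarrow> (real \<Rightarrow> real) \<Rightarrow> bool" where
  "is_principal_part f P \<longleftrightarrow>
     (\<exists>N a. P = (\<lambda>\<epsilon>. \<Sum>k=1..N. a k / \<epsilon> ^ k)) \<and>
     (\<exists>b r. r > 0 \<and> (\<forall>\<epsilon>\<in>{0<..<r}. (\<lambda>n. b n * \<epsilon> ^ n) sums (f \<epsilon> - P \<epsilon>)))"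

definition principal_part :: "(real \<Rightarrow> real) \<Rightarrow> real \<Rightarrow> real" where
  "principal_part f = (THE P. is_principal_part f P)"

definition R_op :: "(real \<Rightarrow> real \<Rightarrow> real) \<Rightarrow> real \<Rightarrow> real \<Rightarrow> real" where
  "R_op F = (\<lambda>\<epsilon> c. principal_part (\<lambda>e. F e 1) \<epsilon>)"

definition phi_l2_bracket :: "real \<Rightarrow> real \<Rightarrow> real" where
  "phi_l2_bracket \<epsilon> c =
     phi_l2 \<epsilon> c - R_op phi_l2 \<epsilon> c - R_op phi_dot \<epsilon> c * phi_dot \<epsilon> c
     + R_op (\<lambda>e d. R_op phi_dot e d * phi_dot e d) \<epsilon> c"

end

theory Submission
  imports Defs "HOL-Complex_Analysis.Complex_Analysis" "HOL-Real_Asymp.Real_Asymp"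
begin

lemma Beta_refl:
  assumes "0 < e" "e < (1::real)"
  shows "Beta (1 - e) e = pi / sin (pi * e)"
proof -
  have "complex_of_real (Beta (1 - e) e) = Gamma (of_real e) * Gamma (1 - of_real e)"
    by (simp add: Beta_def Gamma_complex_of_real flip: Gamma_complex_of_real)
  also have "\<dots> = of_real pi / sin (of_real pi * of_real e)"
    by (rule Gamma_reflection_complex)
  also have "\<dots> = of_real (pi / sin (pi * e))"
    by (simp add: sin_of_real flip: of_real_mult)
  finally show ?thesis by (simp only: of_real_eq_iff)
qed

lemma alg: "(u::real) > 0 \<Longrightarrow> c > 0 \<Longrightarrow> c / u^2 * (a * b * p / (c / u)) = a * (b * (p / u))"
  by (simp add: field_simps power2_eq_square)

lemma int_dot:
  assumes e: "0 < e" "e < (1::real)" and c: "c > 0"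
  shows "(\<lambda>y. y powr (-e) / (y + c)) absolutely_integrable_on {0<..} \<and>
         integral {0<..} (\<lambda>y. y powr (-e) / (y + c)) = c powr (-e) * (pi / sin (pi * e))"
proof -
  define g where "g t = c * t / (1 - t)" for t :: real
  define g' where "g' t = c / (1 - t)^2" for t :: real
  let ?S = "{0<..<1::real}"
  have der: "(g has_field_derivative g' t) (at t within ?S)" if "t \<in> ?S" for t
    using that unfolding g_def g'_def
    by (auto intro!: derivative_eq_intros simp: field_simps power2_eq_square)
  have inj: "inj_on g ?S"
    unfolding g_def inj_on_def using c by (auto simp: field_simps)
  have img: "g ` ?S = {0<..}"
  proof safe
    fix t assume "t \<in> ?S" then show "0 < g t" using c by (auto simp: g_def)
  next
    fix y :: real assume "0 < y"
    have "y / (y + c) \<in> ?S" using \<open>0 < y\<close> c by auto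
    moreover have "g (y / (y + c)) = y"
    proof -
      have "1 - y / (y + c) = c / (y + c)" using \<open>0 < y\<close> c by (simp add: field_simps)
      then show ?thesis using \<open>0 < y\<close> c by (simp add: g_def)
    qed
    ultimately show "y \<in> g ` ?S" by (metis image_eqI)
  qed
  have eq: "\<bar>g' t\<bar> * (g t powr (-e) / (g t + c)) =
      c powr (-e) * (t powr ((1 - e) - 1) * (1 - t) powr (e - 1))" if "t \<in> ?S" for t
  proof -
    have t: "0 < t" "t < 1" using that by auto
    have "g t powr (-e) = c powr (-e) * t powr (-e) * (1 - t) powr e"
      using t c by (simp add: g_def powr_divide powr_mult powr_minus_divide divide_simps)
    moreover have "(1 - t) powr (e - 1) = (1 - t) powr e / (1 - t)"
      using t by (simp add: powr_diff)
    moreover have "g t + c = c / (1 - t)" using t c by (simp add: g_def field_simps)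
    moreover have "\<bar>g' t\<bar> = c / (1 - t)^2" using t c by (simp add: g'_def)
    moreover have "t powr ((1 - e) - 1) = t powr (-e)" by simp
    ultimately show ?thesis using t c
      by (simp only:) (rule alg, auto)
  qed
  have B: "((\<lambda>t. t powr ((1 - e) - 1) * (1 - t) powr (e - 1)) has_integral Beta (1 - e) e) ?S"
    using has_integral_Beta_real[of "1 - e" e] e by (simp add: has_integral_Icc_iff_Ioo)
  hence B': "((\<lambda>t. \<bar>g' t\<bar> * (g t powr (-e) / (g t + c))) has_integral
               c powr (-e) * Beta (1 - e) e) ?S"
    using has_integral_mult_right[OF B, of "c powr (-e)"]
    by (subst has_integral_cong[OF eq]) auto
  have "(\<lambda>t. \<bar>g' t\<bar> * (g t powr (-e) / (g t + c))) absolutely_integrable_on ?S"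
  proof (intro nonnegative_absolutely_integrable_1)
    show "(\<lambda>t. \<bar>g' t\<bar> * (g t powr (-e) / (g t + c))) integrable_on ?S" using B' by auto
    fix t assume t: "t \<in> ?S"
    then have "0 < g t" using c by (auto simp: g_def)
    then show "0 \<le> \<bar>g' t\<bar> * (g t powr (-e) / (g t + c))" using c
      by (intro mult_nonneg_nonneg divide_nonneg_pos) auto
  qed
  with B' have "(\<lambda>y. y powr (-e) / (y + c)) absolutely_integrable_on (g ` ?S) \<and>
      integral (g ` ?S) (\<lambda>y. y powr (-e) / (y + c)) = c powr (-e) * Beta (1 - e) e"
    by (subst has_absolute_integral_change_of_variables_1'[OF _ der inj, symmetric])
       (auto simp: integral_unique)
  then show ?thesis using img Beta_refl[OF e] by simp
qed


lemma lbint_eq: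
  fixes f :: "real \<Rightarrow> real"
  assumes "f absolutely_integrable_on S" "S \<in> sets borel" "f \<in> borel_measurable borel"
  shows "(LBINT x:S. f x) = integral S f"
proof -
  have "set_integrable lborel S f"
    using assms unfolding set_integrable_def absolutely_integrable_on_def
    by (simp add: integrable_completion)
  then show ?thesis by (rule set_borel_integral_eq_integral)
qed

lemma phi_dot_eq:
  assumes "0 < e" "e < (1::real)" "c > 0"
  shows "phi_dot e c = c powr (-e) * (pi / sin (pi * e))"
  unfolding phi_dot_def using int_dot[OF assms]
  by (subst lbint_eq) auto

lemma phi_l2_eq:
  assumes e: "0 < e" "e < (1/2::real)" and c: "c > 0"
  shows "phi_l2 e c = c powr (-2*e) * (pi / sin (pi * e)) * (pi / sin (pi * (2*e)))"
proof -
  have "phi_l2 e c = (LBINT y:{0<..}. (pi / sin (pi * e)) * ((y powr (-(2*e))) / (y + c)))"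
  proof -
   have *: "y powr (-e) / (y + c) * (LBINT z:{0<..}. z powr (-e) / (z + y)) =
       (pi / sin (pi * e)) * ((y powr (-(2*e))) / (y + c))" if y: "y \<in> {0<..}" for y
   proof -
    have "(LBINT z:{0<..}. z powr (-e) / (z + y)) = y powr (-e) * (pi / sin (pi * e))"
      using phi_dot_eq[of e y] e y unfolding phi_dot_def by auto
    then show "y powr (-e) / (y + c) * (LBINT z:{0<..}. z powr (-e) / (z + y)) =
       (pi / sin (pi * e)) * ((y powr (-(2*e))) / (y + c))"
      using y by (simp add: field_simps flip: powr_add)
   qed
   show ?thesis unfolding phi_l2_def by (rule set_lebesgue_integral_cong) (use * in auto)
  qed
  also have "\<dots> = (pi / sin (pi * e)) * (LBINT y:{0<..}. (y powr (-(2*e))) / (y + c))"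
    by (rule set_integral_mult_right)
  also have "(LBINT y:{0<..}. (y powr (-(2*e))) / (y + c)) = c powr (-(2*e)) * (pi / sin (pi * (2*e)))"
    using phi_dot_eq[of "2*e" c] e c unfolding phi_dot_def by auto
  finally show ?thesis by simp
qed


section \<open>Uniqueness of principal parts\<close>

lemma pp_unique:
  assumes "is_principal_part f P" "is_principal_part f Q"
  shows "P = Q"
proof -
  obtain N a b r where P: "P = (\<lambda>e. \<Sum>k=1..N. a k / e ^ k)" and r: "r > 0"
    and Pb: "\<forall>e\<in>{0<..<r}. (\<lambda>n. b n * e ^ n) sums (f e - P e)"
    using assms(1) unfolding is_principal_part_def by blast
  obtain M a' b' r' where Q: "Q = (\<lambda>e. \<Sum>k=1..M. a' k / e ^ k)" and r': "r' > 0"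
    and Qb: "\<forall>e\<in>{0<..<r'}. (\<lambda>n. b' n * e ^ n) sums (f e - Q e)"
    using assms(2) unfolding is_principal_part_def by blast
  define K where "K = max N M"
  define d where "d k = (if k \<le> N then a k else 0) - (if k \<le> M then a' k else 0)" for k
  have ext: "(\<Sum>k=1..L. g k / e ^ k) = (\<Sum>k=1..K. (if k \<le> L then g k else 0) / e ^ k)"
    if "L \<le> K" for L g and e :: real
    by (rule sum.mono_neutral_cong_left) (use that in auto)
  have PQ: "P e - Q e = (\<Sum>k=1..K. d k / e ^ k)" for e
    unfolding P Q d_def diff_divide_distrib sum_subtractf
    by (subst ext[of N], simp add: K_def, subst ext[of M], simp add: K_def) simp
  define r0 where "r0 = min r r'"
  have r0: "r0 > 0" using r r' by (simp add: r0_def)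
  define \<beta> where "\<beta> n = b' n - b n" for n
  have Gs: "(\<lambda>n. \<beta> n * e ^ n) sums (P e - Q e)" if "e \<in> {0<..<r0}" for e
  proof -
    have "(\<lambda>n. b' n * e ^ n - b n * e ^ n) sums ((f e - Q e) - (f e - P e))"
      using Pb Qb that by (intro sums_diff) (auto simp: r0_def)
    then show ?thesis by (simp add: \<beta>_def algebra_simps)
  qed
  define G where "G x = (\<Sum>n. \<beta> n * x ^ n)" for x :: real
  have "summable (\<lambda>n. \<beta> n * (r0/2) ^ n)"
    using Gs[of "r0/2"] r0 by (auto intro: sums_summable)
  then have Gc: "isCont G 0" unfolding G_def
    by (rule isCont_powser) (use r0 in auto)
  have GPQ: "G e = P e - Q e" if "e \<in> {0<..<r0}" for e
    using Gs[OF that] unfolding G_def by (simp add: sums_iff)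
  have Gr: "(G \<longlongrightarrow> G 0) (at_right 0)"
    using Gc by (simp add: isCont_def filterlim_at_split)
  have dz: "\<forall>k\<in>{1..K}. d k = 0"
  proof (rule ccontr)
    assume "\<not> ?thesis"
    define S where "S = {k\<in>{1..K}. d k \<noteq> 0}"
    have Sne: "S \<noteq> {}" "finite S" using \<open>\<not> _\<close> by (auto simp: S_def)
    define m where "m = Max S"
    have mS: "m \<in> S" using Sne by (simp add: m_def)
    have mge: "k \<le> m" if "k \<in> S" for k using Sne that by (simp add: m_def)
    have m1: "1 \<le> m" "m \<le> K" "d m \<noteq> 0" using mS by (auto simp: S_def)
    have red: "e ^ m * (P e - Q e) = (\<Sum>k=1..m. d k * e ^ (m - k))" if "e \<noteq> 0" for e :: real
    proof -
      have "(\<Sum>k=1..K. d k / e ^ k) = (\<Sum>k=1..m. d k / e ^ k)"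
      proof (rule sum.mono_neutral_right)
        show "\<forall>i\<in>{1..K} - {1..m}. d i / e ^ i = 0"
        proof
          fix i assume i: "i \<in> {1..K} - {1..m}"
          then have "i \<notin> S" using mge by force
          then show "d i / e ^ i = 0" using i by (auto simp: S_def)
        qed
      qed (use m1 in auto)
      then have "e ^ m * (P e - Q e) = (\<Sum>k=1..m. e ^ m * (d k / e ^ k))"
        by (simp add: PQ sum_distrib_left)
      also have "\<dots> = (\<Sum>k=1..m. d k * e ^ (m - k))"
        by (rule sum.cong) (use that in \<open>auto simp: power_diff\<close>)
      finally show ?thesis .
    qed
    have l1: "((\<lambda>e. \<Sum>k=1..m. d k * e ^ (m - k)) \<longlongrightarrow> (\<Sum>k=1..m. d k * 0 ^ (m - k))) (at_right (0::real))"
      by (intro tendsto_intros)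
    have "(\<Sum>k=1..m. d k * (0::real) ^ (m - k)) = (\<Sum>k\<in>{1..m}. if k = m then d k else 0)"
      by (rule sum.cong) auto
    also have "\<dots> = d m" using m1 by simp
    finally have l1': "((\<lambda>e. \<Sum>k=1..m. d k * e ^ (m - k)) \<longlongrightarrow> d m) (at_right (0::real))"
      using l1 by simp
    have l2: "((\<lambda>e. e ^ m * G e) \<longlongrightarrow> 0 ^ m * G 0) (at_right (0::real))"
      by (intro tendsto_intros Gr)
    have ev: "eventually (\<lambda>e. e ^ m * G e = (\<Sum>k=1..m. d k * e ^ (m - k))) (at_right (0::real))"
      unfolding eventually_at_right_field
      by (rule exI[of _ r0]) (use r0 GPQ red in auto)
    have "((\<lambda>e. \<Sum>k=1..m. d k * e ^ (m - k)) \<longlongrightarrow> 0) (at_right (0::real))"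
      using tendsto_cong[OF ev] l2 m1 by (simp add: power_0_left)
    with l1' have "d m = 0" by (rule tendsto_unique[rotated]) simp
    with m1 show False by simp
  qed
  have "P e - Q e = 0" for e unfolding PQ using dz by simp
  then show ?thesis by auto
qed

lemma pp_eq: "is_principal_part f P \<Longrightarrow> principal_part f = P"
  unfolding principal_part_def by (rule the_equality) (auto intro: pp_unique)


section \<open>Power series expansions\<close>

definition qs :: "complex \<Rightarrow> complex" where
  "qs = (\<lambda>z. if z = 0 then deriv (\<lambda>z. sin (of_real pi * z)) 0
              else (sin (of_real pi * z) - sin (of_real pi * 0)) / (z - 0))"

lemma qs_holo: "qs holomorphic_on UNIV"
  unfolding qs_def by (rule pole_lemma) (auto intro!: holomorphic_intros)

lemma qs_0: "qs 0 = of_real pi"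
proof -
  have "((\<lambda>z. sin (of_real pi * z)) has_field_derivative cos (of_real pi * 0) * of_real pi) (at (0::complex))"
    by (auto intro!: derivative_eq_intros)
  then show ?thesis unfolding qs_def by (simp add: DERIV_imp_deriv)
qed

lemma qs_nz0: "z \<noteq> 0 \<Longrightarrow> qs z = sin (of_real pi * z) / z"
  by (simp add: qs_def)

lemma qs_nz: assumes "norm z < 1" shows "qs z \<noteq> 0"
proof (cases "z = 0")
  case True then show ?thesis by (simp add: qs_0)
next
  case False
  have "sin (of_real pi * z) \<noteq> 0"
  proof
    assume "sin (of_real pi * z) = 0"
    then obtain n :: int where n: "of_real pi * z = of_real (of_int n * pi)"
      by (auto simp: sin_eq_0)
    then have "z = of_int n" by (simp add: field_simps)
    with assms have "\<bar>of_int n :: real\<bar> < 1" by (metis norm_of_int)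
    then have "n = 0" by linarith
    with \<open>z = of_int n\<close> False show False by simp
  qed
  then show ?thesis using False by (simp add: qs_nz0)
qed

lemma qs_even: "qs (-z) = qs z"
  by (cases "z = 0") (simp_all add: qs_nz0)

lemma qs_real: "x \<noteq> 0 \<Longrightarrow> qs (of_real x) = of_real (sin (pi * x) / x)"
  by (simp add: qs_nz0 sin_of_real flip: of_real_mult)

definition h1 :: "complex \<Rightarrow> complex" where "h1 z = of_real pi / qs z"
definition h2 :: "complex \<Rightarrow> complex" where "h2 z = h1 z * h1 (2 * z)"

lemma h1_holo: "h1 holomorphic_on ball 0 1"
proof -
  have "qs holomorphic_on ball 0 1" using qs_holo by (rule holomorphic_on_subset) auto
  then show ?thesis unfolding h1_def[abs_def]
    by (intro holomorphic_intros) (auto simp: qs_nz)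
qed

lemma h2_holo: "h2 holomorphic_on ball 0 (1/2)"
proof -
  have "(h1 \<circ> (\<lambda>z. 2 * z)) holomorphic_on ball 0 (1/2)"
    by (rule holomorphic_on_compose) (auto intro!: holomorphic_intros
        intro: holomorphic_on_subset[OF h1_holo] simp: norm_mult)
  moreover have "h1 holomorphic_on ball 0 (1/2)"
    by (rule holomorphic_on_subset[OF h1_holo]) auto
  ultimately show ?thesis unfolding h2_def[abs_def]
    by (intro holomorphic_intros) (auto simp: o_def)
qed

lemma even_deriv0:
  assumes holo: "H holomorphic_on ball 0 R" and R: "R > 0"
    and ev: "\<And>z. z \<in> ball 0 R \<Longrightarrow> H (-z) = H z"
  shows "deriv H 0 = 0"
proof -
  have D: "(H has_field_derivative deriv H 0) (at 0)"
    using holomorphic_derivI[OF holo open_ball, of 0 UNIV] R by simp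
  have D': "(H has_field_derivative deriv H 0) (at (-0))" using D by simp
  have "((\<lambda>z. H (-z)) has_field_derivative deriv H 0 * (-1)) (at 0)"
    by (rule DERIV_chain2[where g=uminus and x=0, OF D']) (auto intro!: derivative_eq_intros)
  then have "(H has_field_derivative deriv H 0 * (-1)) (at 0)"
    by (rule has_field_derivative_transform_within_open[of _ _ _ "ball 0 R"]) (use R ev in auto)
  with D have "deriv H 0 = deriv H 0 * (-1)" by (rule DERIV_unique)
  then show ?thesis by simp
qed

lemma ps_exist:
  assumes holo: "H holomorphic_on ball 0 R" and R: "R > 0"
    and re: "\<And>x. 0 < x \<Longrightarrow> x < R \<Longrightarrow> H (of_real x) = of_real (hr x)"
  shows "\<exists>b. \<forall>x\<in>{0<..<R}. (\<lambda>n. b n * x ^ n) sums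
           ((hr x - Re (\<Sum>i<k. (deriv ^^ i) H 0 / fact i * of_real x ^ i)) / x ^ k)"
proof -
  define C where "C n = (deriv ^^ n) H 0 / fact n" for n
  have "\<forall>x\<in>{0<..<R}. (\<lambda>n. Re (C (n + k)) * x ^ n) sums
           ((hr x - Re (\<Sum>i<k. C i * of_real x ^ i)) / x ^ k)"
  proof
    fix x assume x: "x \<in> {0<..<R}"
    have "(\<lambda>n. C n * (of_real x - 0) ^ n) sums H (of_real x)"
      unfolding C_def by (rule holomorphic_power_series[OF holo]) (use x in auto)
    then have "(\<lambda>n. C n * of_real x ^ n) sums of_real (hr x)" using re x by simp
    then have "(\<lambda>n. C (n + k) * of_real x ^ (n + k)) sums (of_real (hr x) - (\<Sum>i<k. C i * of_real x ^ i))"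
      by (subst sums_iff_shift) simp
    then have "(\<lambda>n. C (n + k) * of_real x ^ (n + k) / of_real x ^ k) sums
        ((of_real (hr x) - (\<Sum>i<k. C i * of_real x ^ i)) / of_real x ^ k)"
      by (rule sums_divide)
    then have "(\<lambda>n. Re (C (n + k) * of_real x ^ (n + k) / of_real x ^ k)) sums
        Re ((of_real (hr x) - (\<Sum>i<k. C i * of_real x ^ i)) / of_real x ^ k)"
      by (rule sums_Re)
    moreover have "Re (C (n + k) * of_real x ^ (n + k) / of_real x ^ k) = Re (C (n + k)) * x ^ n" for n
    proof -
      have "C (n + k) * of_real x ^ (n + k) / of_real x ^ k = of_real (x ^ n) * C (n + k)"
        using x by (simp add: power_add field_simps)
      then show ?thesis by simp
    qed
    moreover have "Re ((of_real (hr x) - (\<Sum>i<k. C i * of_real x ^ i)) / of_real x ^ k) =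
        (hr x - Re (\<Sum>i<k. C i * of_real x ^ i)) / x ^ k"
    proof -
      have "(of_real (hr x) - (\<Sum>i<k. C i * of_real x ^ i)) / of_real x ^ k =
            of_real (1 / x ^ k) * (of_real (hr x) - (\<Sum>i<k. C i * of_real x ^ i))"
        by (simp add: field_simps)
      then show ?thesis by (simp add: field_simps)
    qed
    ultimately show "(\<lambda>n. Re (C (n + k)) * x ^ n) sums ((hr x - Re (\<Sum>i<k. C i * of_real x ^ i)) / x ^ k)"
      by simp
  qed
  then show ?thesis unfolding C_def by (rule exI[where x="\<lambda>n. Re ((deriv ^^ (n + k)) H 0 / fact (n + k))"])
qed


lemma h1_0: "h1 0 = 1" by (simp add: h1_def qs_0)
lemma h2_0: "h2 0 = 1" by (simp add: h2_def h1_0)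
lemma h1_even: "h1 (-z) = h1 z" by (simp add: h1_def qs_even)
lemma h2_even: "h2 (-z) = h2 z" using h1_even[of z] h1_even[of "2*z"] by (simp add: h2_def)
lemma h1_real: "x \<noteq> 0 \<Longrightarrow> h1 (of_real x) = of_real (pi * x / sin (pi * x))"
  by (simp add: h1_def qs_real)
lemma h2_real: "x \<noteq> 0 \<Longrightarrow> h2 (of_real x) = of_real ((pi * x / sin (pi * x)) * (pi * (2 * x) / sin (pi * (2 * x))))"
  using h1_real[of x] h1_real[of "2*x"] by (simp add: h2_def)

lemma dh1: "deriv h1 0 = 0"
  by (rule even_deriv0[OF h1_holo]) (auto simp: h1_even)
lemma dh2: "deriv h2 0 = 0"
  by (rule even_deriv0[OF h2_holo]) (auto simp: h2_even)

lemma sin_pos': "0 < x \<Longrightarrow> x < 1 \<Longrightarrow> sin (pi * x) > 0"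
  by (rule sin_gt_zero) auto

lemma E1: "\<exists>b. \<forall>x\<in>{0<..<1}. (\<lambda>n. b n * x ^ n) sums ((pi * x / sin (pi * x) - 1) / x)"
  using ps_exist[OF h1_holo, of "\<lambda>x. pi * x / sin (pi * x)" 1] by (simp add: h1_real h1_0)

lemma E2: "\<exists>b. \<forall>x\<in>{0<..<1}. (\<lambda>n. b n * x ^ n) sums ((pi * x / sin (pi * x) - 1) / x ^ 2)"
  using ps_exist[OF h1_holo, of "\<lambda>x. pi * x / sin (pi * x)" 2]
  by (simp add: h1_real h1_0 dh1 numeral_2_eq_2)

lemma E3: "\<exists>b. \<forall>x\<in>{0<..<1/2}. (\<lambda>n. b n * x ^ n) sums
   (((pi * x / sin (pi * x)) * (pi * (2 * x) / sin (pi * (2 * x))) - 1) / x ^ 2)"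
  using ps_exist[OF h2_holo, of "\<lambda>x. (pi * x / sin (pi * x)) * (pi * (2 * x) / sin (pi * (2 * x)))" 2]
  by (simp add: h2_real h2_0 dh2 numeral_2_eq_2)

section \<open>The three principal parts\<close>

lemma PP1: "principal_part (\<lambda>e. phi_dot e 1) = (\<lambda>e. 1 / e)"
proof (rule pp_eq, unfold is_principal_part_def, intro conjI)
  show "\<exists>N a. (\<lambda>e::real. 1 / e) = (\<lambda>e. \<Sum>k = 1..N. a k / e ^ k)"
    by (rule exI[of _ 1], rule exI[of _ "\<lambda>_. 1"]) simp
  obtain b where b: "\<forall>x\<in>{0<..<1}. (\<lambda>n. b n * x ^ n) sums ((pi * x / sin (pi * x) - 1) / x)"
    using E1 by blast
  have "\<forall>e\<in>{0<..<1}. (\<lambda>n. b n * e ^ n) sums (phi_dot e 1 - 1 / e)"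
  proof
    fix e :: real assume e: "e \<in> {0<..<1}"
    have "sin (pi * e) > 0" using e by (intro sin_pos') auto
    then have "phi_dot e 1 - 1 / e = (pi * e / sin (pi * e) - 1) / e"
      using e by (simp add: phi_dot_eq field_simps)
    then show "(\<lambda>n. b n * e ^ n) sums (phi_dot e 1 - 1 / e)" using b e by simp
  qed
  then show "\<exists>b r. r > 0 \<and> (\<forall>e\<in>{0<..<r}. (\<lambda>n. b n * e ^ n) sums (phi_dot e 1 - 1 / e))"
    by (intro exI[of _ b] exI[of _ 1]) simp
qed

lemma R1: "R_op phi_dot = (\<lambda>e c. 1 / e)"
  unfolding R_op_def PP1 by simp

lemma PP2: "principal_part (\<lambda>e. 1 / e * phi_dot e 1) = (\<lambda>e. 1 / e ^ 2)"
proof (rule pp_eq, unfold is_principal_part_def, intro conjI)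
  show "\<exists>N a. (\<lambda>e::real. 1 / e ^ 2) = (\<lambda>e. \<Sum>k = 1..N. a k / e ^ k)"
    by (rule exI[of _ 2], rule exI[of _ "\<lambda>k. if k = 2 then 1 else 0"]) (simp add: numeral_2_eq_2)
  obtain b where b: "\<forall>x\<in>{0<..<1}. (\<lambda>n. b n * x ^ n) sums ((pi * x / sin (pi * x) - 1) / x ^ 2)"
    using E2 by blast
  have "\<forall>e\<in>{0<..<1}. (\<lambda>n. b n * e ^ n) sums (1 / e * phi_dot e 1 - 1 / e ^ 2)"
  proof
    fix e :: real assume e: "e \<in> {0<..<1}"
    have "sin (pi * e) > 0" using e by (intro sin_pos') auto
    then have "1 / e * phi_dot e 1 - 1 / e ^ 2 = (pi * e / sin (pi * e) - 1) / e ^ 2"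
      using e by (simp add: phi_dot_eq field_simps power2_eq_square)
    then show "(\<lambda>n. b n * e ^ n) sums (1 / e * phi_dot e 1 - 1 / e ^ 2)" using b e by simp
  qed
  then show "\<exists>b r. r > 0 \<and> (\<forall>e\<in>{0<..<r}. (\<lambda>n. b n * e ^ n) sums (1 / e * phi_dot e 1 - 1 / e ^ 2))"
    by (intro exI[of _ b] exI[of _ 1]) simp
qed

lemma R2: "R_op (\<lambda>e d. R_op phi_dot e d * phi_dot e d) = (\<lambda>e c. 1 / e ^ 2)"
  unfolding R1 unfolding R_op_def PP2 by simp

lemma PP3: "principal_part (\<lambda>e. phi_l2 e 1) = (\<lambda>e. 1 / (2 * e ^ 2))"
proof (rule pp_eq, unfold is_principal_part_def, intro conjI)
  show "\<exists>N a. (\<lambda>e::real. 1 / (2 * e ^ 2)) = (\<lambda>e. \<Sum>k = 1..N. a k / e ^ k)"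
    by (rule exI[of _ 2], rule exI[of _ "\<lambda>k. if k = 2 then 1/2 else 0"]) (simp add: numeral_2_eq_2)
  obtain b where b: "\<forall>x\<in>{0<..<1/2}. (\<lambda>n. b n * x ^ n) sums
      (((pi * x / sin (pi * x)) * (pi * (2 * x) / sin (pi * (2 * x))) - 1) / x ^ 2)"
    using E3 by blast
  have "\<forall>e\<in>{0<..<1/2}. (\<lambda>n. b n / 2 * e ^ n) sums (phi_l2 e 1 - 1 / (2 * e ^ 2))"
  proof
    fix e :: real assume e: "e \<in> {0<..<1/2}"
    have "sin (pi * e) > 0" "sin (pi * (2 * e)) > 0" using e by (intro sin_pos'; simp)+
    then have "phi_l2 e 1 - 1 / (2 * e ^ 2) =
       (((pi * e / sin (pi * e)) * (pi * (2 * e) / sin (pi * (2 * e))) - 1) / e ^ 2) / 2"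
      using e by (simp add: phi_l2_eq field_simps power2_eq_square)
    moreover have "(\<lambda>n. b n * e ^ n / 2) sums
       ((((pi * e / sin (pi * e)) * (pi * (2 * e) / sin (pi * (2 * e))) - 1) / e ^ 2) / 2)"
      using b e by (intro sums_divide) simp
    ultimately show "(\<lambda>n. b n / 2 * e ^ n) sums (phi_l2 e 1 - 1 / (2 * e ^ 2))" by simp
  qed
  then show "\<exists>b r. r > 0 \<and> (\<forall>e\<in>{0<..<r}. (\<lambda>n. b n * e ^ n) sums (phi_l2 e 1 - 1 / (2 * e ^ 2)))"
    by (intro exI[of _ "\<lambda>n. b n / 2"] exI[of _ "1/2"]) simp
qed

lemma R3: "R_op phi_l2 = (\<lambda>e c. 1 / (2 * e ^ 2))"
  unfolding R_op_def PP3 by simp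

lemma lim_main: "c > 0 \<Longrightarrow> ((\<lambda>e::real. c powr (-2*e) * (pi / sin (pi*e)) * (pi/sin(pi*(2*e))) - 1/(2*e^2)
      - (1/e) * (c powr (-e) * (pi/sin(pi*e))) + 1/e^2) \<longlongrightarrow> (ln c)^2/2 + pi^2/4) (at_right 0)"
  apply (rule tendsto_eq_rhs)
   apply real_asymp
  apply (simp add: field_simps power2_eq_square)
  done

theorem mainTheorem6:
  fixes c :: real
  assumes "c > 0"
  shows "((\<lambda>\<epsilon>. phi_l2_bracket \<epsilon> c) \<longlongrightarrow> (ln c)\<^sup>2 / 2 + pi\<^sup>2 / 4) (at_right 0)"
proof -
  have lim: "((\<lambda>e::real. c powr (-2*e) * (pi / sin (pi*e)) * (pi/sin(pi*(2*e))) - 1/(2*e^2)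
      - (1/e) * (c powr (-e) * (pi/sin(pi*e))) + 1/e^2) \<longlongrightarrow> (ln c)^2/2 + pi^2/4) (at_right 0)"
    by (rule lim_main[OF assms])
  have ev: "eventually (\<lambda>e. c powr (-2*e) * (pi / sin (pi*e)) * (pi/sin(pi*(2*e))) - 1/(2*e^2)
      - (1/e) * (c powr (-e) * (pi/sin(pi*e))) + 1/e^2 = phi_l2_bracket e c) (at_right 0)"
    unfolding eventually_at_right_field
  proof (intro exI[of _ "1/2"] conjI allI impI)
    fix e :: real assume "0 < e" "e < 1/2"
    then show "c powr (-2*e) * (pi / sin (pi*e)) * (pi/sin(pi*(2*e))) - 1/(2*e^2)
      - (1/e) * (c powr (-e) * (pi/sin(pi*e))) + 1/e^2 = phi_l2_bracket e c"
      using assms unfolding phi_l2_bracket_def R2 by (simp add: R1 R3 phi_l2_eq phi_dot_eq)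
  qed simp
  show ?thesis using tendsto_cong[OF ev] lim by simp
qed

end
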